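(* Let $H$ be a reduced hypergraph, let $n\ge 1$, and let $m = 4\,\mathrm{rank}(H)^6 n^5$. If the $m\times m$-grid is a minor of the primal graph of $H$, then the $n\times n$-grid is an expressive minor of $H$.
   Context: A hypergraph $H$ is a pair $(V(H),E(H))$ with $E(H)\subseteq 2^{V(H)}$; $\mathrm{rank}(H)=\max_{e}|e|$. $H$ is reduced if every vertex lies in at least one edge, there is no empty edge, and no two distinct vertices lie in exactly the same set of edges. The primal graph of $H$ has vertex set $V(H)$, with $x,y$ adjacent iff some edge contains both. A minor map from a graph $G$ onto $H$ is $\mu:V(G)\to 2^{V(H)}$ with each $\mu(v)$ connected in the primal graph, the $\mu(v)$ pairwise disjoint, for adjacent $u,v$ some primal edge joining $\mu(u)$ and $\mu(v)$, and $\bigcup_v\mu(v)=V(H)$. A path in $H$ alternates vertices and edges, consecutive elements incident, without repetition. $\mu$ is an expressive minor map if it is a minor map from $G$ onto $H$ and there is $\rho:E(G)\to E(H)$ such that: $\rho$ is injective; for every edge $\{u,v\}$ of $G$, $\rho(\{u,v\})$ intersects both $\mu(u)$ and $\mu(v)$; and for any two edges $e_1,e_2$ of $G$ sharing a vertex there is a path in $H$ from $\rho(e_1)$ to $\rho(e_2)$ using no edge of $\rho(E(G))$ other than $\rho(e_1),\rho(e_2)$ as its start and end. $G$ is an expressive minor of $H$ if such a map exists. *)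

theory Defs
  imports Main
begin

type_synonym 'v hypergraph = "'v set \<times> 'v set set"

definition hV :: "'v hypergraph \<Rightarrow> 'v set" where "hV H = fst H"
definition hE :: "'v hypergraph \<Rightarrow> 'v set set" where "hE H = snd H"

definition hypergraph :: "'v hypergraph \<Rightarrow> bool" where
  "hypergraph H \<longleftrightarrow> hE H \<subseteq> Pow (hV H)"

definition hrank :: "'v hypergraph \<Rightarrow> nat" where
  "hrank H = Max (insert 0 (card ` hE H))"

definition reduced :: "'v hypergraph \<Rightarrow> bool" where
  "reduced H \<longleftrightarrow>
     (\<forall>x\<in>hV H. \<exists>e\<in>hE H. x \<in> e) \<and>
     {} \<notin> hE H \<and>
     (\<forall>x\<in>hV H. \<forall>y\<in>hV H. x \<noteq> y \<longrightarrow> {e\<in>hE H. x \<in> e} \<noteq> {e\<in>hE H. y \<in> e})"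

text \<open>A (simple) graph is a pair (V, E) where E is a set of 2-element subsets of V.
  We reuse the pair type.\<close>
type_synonym 'v graph = "'v set \<times> 'v set set"

definition primal_graph :: "'v hypergraph \<Rightarrow> 'v graph" where
  "primal_graph H = (hV H, {{x, y} | x y. x \<in> hV H \<and> y \<in> hV H \<and> x \<noteq> y \<and> (\<exists>e\<in>hE H. x \<in> e \<and> y \<in> e)})"

definition grid :: "nat \<Rightarrow> (nat \<times> nat) graph" where
  "grid n = ({0..<n} \<times> {0..<n},
     {{(i, j), (i', j')} | i j i' j'. i < n \<and> j < n \<and> i' < n \<and> j' < n \<and>
        ((i' = Suc i \<and> j' = j) \<or> (i' = i \<and> j' = Suc j))})"

definition connected_in :: "'v graph \<Rightarrow> 'v set \<Rightarrow> bool" where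
  "connected_in P S \<longleftrightarrow> S \<noteq> {} \<and> S \<subseteq> fst P \<and>
     (\<forall>x\<in>S. \<forall>y\<in>S. (\<lambda>a b. a \<in> S \<and> b \<in> S \<and> {a, b} \<in> snd P)\<^sup>*\<^sup>* x y)"

definition minor_map :: "'a graph \<Rightarrow> 'v graph \<Rightarrow> ('a \<Rightarrow> 'v set) \<Rightarrow> bool" where
  "minor_map G P \<mu> \<longleftrightarrow>
     (\<forall>v\<in>fst G. connected_in P (\<mu> v)) \<and>
     (\<forall>u\<in>fst G. \<forall>v\<in>fst G. u \<noteq> v \<longrightarrow> \<mu> u \<inter> \<mu> v = {}) \<and>
     (\<forall>u v. {u, v} \<in> snd G \<longrightarrow> (\<exists>x\<in>\<mu> u. \<exists>y\<in>\<mu> v. {x, y} \<in> snd P)) \<and>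
     \<Union> (\<mu> ` fst G) = fst P"

definition is_minor :: "'a graph \<Rightarrow> 'v graph \<Rightarrow> bool" where
  "is_minor G P \<longleftrightarrow> (\<exists>\<mu>. minor_map G P \<mu>)"

text \<open>A path in H from edge f1 to edge f2: f1 = es!0, vs!0, es!1, vs!1, ..., es!k = f2,
  consecutive elements incident, no repetitions.\<close>
definition hpath :: "'v hypergraph \<Rightarrow> 'v set list \<Rightarrow> 'v list \<Rightarrow> bool" where
  "hpath H es vs \<longleftrightarrow> es \<noteq> [] \<and> length es = Suc (length vs) \<and>
     set es \<subseteq> hE H \<and> set vs \<subseteq> hV H \<and>
     (\<forall>i<length vs. vs ! i \<in> es ! i \<and> vs ! i \<in> es ! Suc i) \<and>
     distinct es \<and> distinct vs"

definition expressive_minor_map :: "'a graph \<Rightarrow> 'v hypergraph \<Rightarrow> ('a \<Rightarrow> 'v set) \<Rightarrow> bool" where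
  "expressive_minor_map G H \<mu> \<longleftrightarrow> minor_map G (primal_graph H) \<mu> \<and>
     (\<exists>\<rho> :: 'a set \<Rightarrow> 'v set.
        inj_on \<rho> (snd G) \<and> \<rho> ` snd G \<subseteq> hE H \<and>
        (\<forall>u v. {u, v} \<in> snd G \<longrightarrow> \<rho> {u, v} \<inter> \<mu> u \<noteq> {} \<and> \<rho> {u, v} \<inter> \<mu> v \<noteq> {}) \<and>
        (\<forall>e1\<in>snd G. \<forall>e2\<in>snd G. e1 \<noteq> e2 \<and> e1 \<inter> e2 \<noteq> {} \<longrightarrow>
           (\<exists>es vs. hpath H es vs \<and> hd es = \<rho> e1 \<and> last es = \<rho> e2 \<and>
              (\<forall>f\<in>set es. f \<in> \<rho> ` snd G \<longrightarrow> f = \<rho> e1 \<or> f = \<rho> e2))))"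

definition expressive_minor :: "'a graph \<Rightarrow> 'v hypergraph \<Rightarrow> bool" where
  "expressive_minor G H \<longleftrightarrow> (\<exists>\<mu>. expressive_minor_map G H \<mu>)"

end

theory Submission
  imports Defs "HOL-Library.FuncSet"
begin


definition Rin :: "'v graph \<Rightarrow> 'v set \<Rightarrow> 'v \<Rightarrow> 'v \<Rightarrow> bool" where
  "Rin P S a b \<longleftrightarrow> a \<in> S \<and> b \<in> S \<and> {a, b} \<in> snd P"

lemma connected_in_Rin:
  "connected_in P S \<longleftrightarrow> S \<noteq> {} \<and> S \<subseteq> fst P \<and> (\<forall>x\<in>S. \<forall>y\<in>S. (Rin P S)\<^sup>*\<^sup>* x y)"
  unfolding connected_in_def Rin_def by simp

lemma Rin_mono:
  assumes "S \<subseteq> T" "(Rin P S)\<^sup>*\<^sup>* x y" shows "(Rin P T)\<^sup>*\<^sup>* x y"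
  using assms(2) by (rule rtranclp_mono[THEN predicate2D, rotated]) (use assms(1) in \<open>auto simp: Rin_def\<close>)

lemma rtranclp_sym_rel:
  assumes "\<And>a b. R a b \<Longrightarrow> R b a" "R\<^sup>*\<^sup>* x y" shows "R\<^sup>*\<^sup>* y x"
  using assms(2)
proof induction
  case base then show ?case by simp
next
  case (step y z)
  then show ?case by (meson assms(1) converse_rtranclp_into_rtranclp)
qed

lemma Rin_sym: "Rin P S a b \<Longrightarrow> Rin P S b a"
  unfolding Rin_def by (simp add: insert_commute)

lemma Rin_rtr_sym: "(Rin P S)\<^sup>*\<^sup>* x y \<Longrightarrow> (Rin P S)\<^sup>*\<^sup>* y x"
  by (rule rtranclp_sym_rel[OF Rin_sym])

lemma chain_rtr:
  assumes "\<And>k. a \<le> k \<Longrightarrow> k < b \<Longrightarrow> R (h k) (h (Suc k))" "a \<le> b"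
  shows "R\<^sup>*\<^sup>* (h a) (h b)"
  using assms
proof (induction b)
  case 0 then show ?case by simp
next
  case (Suc b)
  show ?case
  proof (cases "a = Suc b")
    case True then show ?thesis by simp
  next
    case False
    then have "a \<le> b" using Suc.prems by simp
    then have "R\<^sup>*\<^sup>* (h a) (h b)" using Suc by simp
    moreover have "R (h b) (h (Suc b))" using Suc.prems \<open>a \<le> b\<close> by simp
    ultimately show ?thesis by simp
  qed
qed

lemma primal_edge:
  "{x, y} \<in> snd (primal_graph H) \<longleftrightarrow> x \<in> hV H \<and> y \<in> hV H \<and> x \<noteq> y \<and> (\<exists>e\<in>hE H. x \<in> e \<and> y \<in> e)"
proof
  assume "{x, y} \<in> snd (primal_graph H)"
  then obtain x' y' where "{x,y} = {x',y'}" "x' \<in> hV H" "y' \<in> hV H" "x' \<noteq> y'" "\<exists>e\<in>hE H. x' \<in> e \<and> y' \<in> e"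
    unfolding primal_graph_def by auto
  then show "x \<in> hV H \<and> y \<in> hV H \<and> x \<noteq> y \<and> (\<exists>e\<in>hE H. x \<in> e \<and> y \<in> e)"
    by (auto simp: doubleton_eq_iff)
next
  assume "x \<in> hV H \<and> y \<in> hV H \<and> x \<noteq> y \<and> (\<exists>e\<in>hE H. x \<in> e \<and> y \<in> e)"
  then show "{x, y} \<in> snd (primal_graph H)" unfolding primal_graph_def by auto
qed

lemma grid_edge_D:
  assumes "{a, b} \<in> snd (grid m)"
  shows "a \<in> {0..<m} \<times> {0..<m} \<and> b \<in> {0..<m} \<times> {0..<m} \<and> a \<noteq> b"
  using assms unfolding grid_def by (auto simp: doubleton_eq_iff)

lemma grid_edge_v:
  "i + 1 < m \<Longrightarrow> j < m \<Longrightarrow> {(i, j), (Suc i, j)} \<in> snd (grid m)"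
  unfolding grid_def by (simp, rule exI[of _ i], rule exI[of _ j], rule exI[of _ "Suc i"], rule exI[of _ j], simp)

lemma grid_edge_h:
  "i < m \<Longrightarrow> j + 1 < m \<Longrightarrow> {(i, j), (i, Suc j)} \<in> snd (grid m)"
  unfolding grid_def by (simp, rule exI[of _ i], rule exI[of _ j], rule exI[of _ i], rule exI[of _ "Suc j"], simp)

lemma lift_conn:
  fixes \<nu> :: "'a \<Rightarrow> 'v set" and G :: "'a graph"
  assumes inner: "\<And>a x y. a \<in> A \<Longrightarrow> x \<in> \<nu> a \<Longrightarrow> y \<in> \<nu> a \<Longrightarrow> T\<^sup>*\<^sup>* x y"
    and adj: "\<And>a b. a \<in> A \<Longrightarrow> b \<in> A \<Longrightarrow> {a, b} \<in> snd G \<Longrightarrow> \<exists>x\<in>\<nu> a. \<exists>y\<in>\<nu> b. T\<^sup>*\<^sup>* x y"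
    and ne: "\<And>a. a \<in> A \<Longrightarrow> \<nu> a \<noteq> {}"
    and path: "(Rin G A)\<^sup>*\<^sup>* a b" and aA: "a \<in> A"
  shows "\<forall>x\<in>\<nu> a. \<forall>y\<in>\<nu> b. T\<^sup>*\<^sup>* x y"
  using path
proof induction
  case base then show ?case using inner aA by blast
next
  case (step b c)
  then have bA: "b \<in> A" and cA: "c \<in> A" and bc: "{b, c} \<in> snd G" by (auto simp: Rin_def)
  obtain x' y' where x': "x' \<in> \<nu> b" and y': "y' \<in> \<nu> c" and xy: "T\<^sup>*\<^sup>* x' y'" using adj[OF bA cA bc] by blast
  show ?case
  proof (intro ballI)
    fix x y assume x: "x \<in> \<nu> a" and y: "y \<in> \<nu> c"
    have "T\<^sup>*\<^sup>* x x'" using step.IH x x' by blast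
    also have "T\<^sup>*\<^sup>* x' y'" by (fact xy)
    also have "T\<^sup>*\<^sup>* y' y" using inner[OF cA y' y] .
    finally show "T\<^sup>*\<^sup>* x y" .
  qed
qed


definition hstep :: "'v hypergraph \<Rightarrow> 'v set set \<Rightarrow> 'v \<Rightarrow> 'v \<Rightarrow> bool" where
  "hstep H R a b \<longleftrightarrow> (\<exists>g\<in>hE H - R. a \<in> g \<and> b \<in> g)"

definition ewalk :: "'v hypergraph \<Rightarrow> 'v set set \<Rightarrow> 'v set \<Rightarrow> 'v set \<Rightarrow> 'v set list \<Rightarrow> bool" where
  "ewalk H R f1 f2 es \<longleftrightarrow> es \<noteq> [] \<and> hd es = f1 \<and> last es = f2 \<and> set es \<subseteq> hE H \<and>
    (\<forall>g\<in>set es. g \<in> R \<longrightarrow> g = f1 \<or> g = f2) \<and> (\<forall>i. Suc i < length es \<longrightarrow> es!i \<inter> es!Suc i \<noteq> {})"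

lemma walk_to:
  assumes "(hstep H R)\<^sup>*\<^sup>* x y" "f1 \<in> hE H" "x \<in> f1"
  shows "\<exists>es. es \<noteq> [] \<and> hd es = f1 \<and> y \<in> last es \<and> set es \<subseteq> hE H \<and>
    (\<forall>g\<in>set es. g \<in> R \<longrightarrow> g = f1) \<and> (\<forall>i. Suc i < length es \<longrightarrow> es!i \<inter> es!Suc i \<noteq> {})"
  using assms(1)
proof induction
  case base
  show ?case by (rule exI[of _ "[f1]"]) (use assms in auto)
next
  case (step y z)
  then obtain es where es: "es \<noteq> []" "hd es = f1" "y \<in> last es" "set es \<subseteq> hE H"
    "\<forall>g\<in>set es. g \<in> R \<longrightarrow> g = f1" "\<forall>i. Suc i < length es \<longrightarrow> es!i \<inter> es!Suc i \<noteq> {}" by blast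
  obtain g where g: "g \<in> hE H" "g \<notin> R" "y \<in> g" "z \<in> g" using step(2) unfolding hstep_def by blast
  have "\<forall>i. Suc i < length (es @ [g]) \<longrightarrow> (es @ [g])!i \<inter> (es @ [g])!Suc i \<noteq> {}"
  proof (intro allI impI)
    fix i assume i: "Suc i < length (es @ [g])"
    show "(es @ [g])!i \<inter> (es @ [g])!Suc i \<noteq> {}"
    proof (cases "Suc i < length es")
      case True then show ?thesis using es(6) by (simp add: nth_append)
    next
      case False
      then have "Suc i = length es" using i by simp
      then have li: "i = length es - 1" by simp
      then have "(es @ [g])!i = es!i" "(es @ [g])!Suc i = g" "es!i = last es"
        using es(1) \<open>Suc i = length es\<close> by (simp_all add: nth_append last_conv_nth)
      then show ?thesis using es(3) g(3) by auto
    qed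
  qed
  then show ?case using es g by (intro exI[of _ "es @ [g]"]) auto
qed

lemma ewalk_exists:
  assumes "(hstep H R)\<^sup>*\<^sup>* x y" "f1 \<in> hE H" "x \<in> f1" "f2 \<in> hE H" "y \<in> f2"
  shows "\<exists>es. ewalk H R f1 f2 es"
proof -
  obtain es where es: "es \<noteq> []" "hd es = f1" "y \<in> last es" "set es \<subseteq> hE H"
    "\<forall>g\<in>set es. g \<in> R \<longrightarrow> g = f1" "\<forall>i. Suc i < length es \<longrightarrow> es!i \<inter> es!Suc i \<noteq> {}"
    using walk_to[OF assms(1-3)] by blast
  have "\<forall>i. Suc i < length (es @ [f2]) \<longrightarrow> (es @ [f2])!i \<inter> (es @ [f2])!Suc i \<noteq> {}"
  proof (intro allI impI)
    fix i assume i: "Suc i < length (es @ [f2])"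
    show "(es @ [f2])!i \<inter> (es @ [f2])!Suc i \<noteq> {}"
    proof (cases "Suc i < length es")
      case True then show ?thesis using es(6) by (simp add: nth_append)
    next
      case False
      then have "Suc i = length es" using i by simp
      then have li: "i = length es - 1" by simp
      then have "(es @ [f2])!i = es!i" "(es @ [f2])!Suc i = f2" "es!i = last es"
        using es(1) \<open>Suc i = length es\<close> by (simp_all add: nth_append last_conv_nth)
      then show ?thesis using es(3) assms(5) by auto
    qed
  qed
  then show ?thesis unfolding ewalk_def using es assms by (intro exI[of _ "es @ [f2]"]) auto
qed

lemma ewalk_splice:
  assumes w: "ewalk H R f1 f2 es" and pq: "p \<le> q" "q < length es"
    and c0: "p = 0 \<Longrightarrow> es!q = f1" and c1: "0 < p \<Longrightarrow> es!(p - 1) \<inter> es!q \<noteq> {}"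
  shows "ewalk H R f1 f2 (take p es @ drop q es)"
proof -
  let ?e = "take p es @ drop q es"
  have len: "length ?e = p + (length es - q)" using pq by simp
  have nth: "\<And>k. k < length ?e \<Longrightarrow> ?e!k = (if k < p then es!k else es!(k - p + q))"
    using pq by (auto simp: nth_append) (metis add.commute)+
  have ne: "?e \<noteq> []" using pq by simp
  have hd: "hd ?e = f1"
  proof (cases "p = 0")
    case True then show ?thesis using c0 pq by (simp add: hd_drop_conv_nth)
  next
    case False
    then have "?e!0 = es!0" using pq by (simp add: nth_append)
    then have "hd ?e = es!0" using ne by (simp add: hd_conv_nth)
    also have "\<dots> = f1" using w unfolding ewalk_def by (metis hd_conv_nth)
    finally show ?thesis .
  qed
  have last: "last ?e = f2" using pq w by (simp add: ewalk_def)
  have set: "set ?e \<subseteq> set es" by (auto dest: in_set_takeD in_set_dropD)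
  have cons: "\<forall>i. Suc i < length ?e \<longrightarrow> ?e!i \<inter> ?e!Suc i \<noteq> {}"
  proof (intro allI impI)
    fix k assume k: "Suc k < length ?e"
    have W: "\<forall>i. Suc i < length es \<longrightarrow> es!i \<inter> es!Suc i \<noteq> {}" using w by (simp add: ewalk_def)
    consider "Suc k < p" | "Suc k = p" | "p \<le> k" by linarith
    then show "?e!k \<inter> ?e!Suc k \<noteq> {}"
    proof cases
      case 1 then show ?thesis using nth[of k] nth[of "Suc k"] k W pq by simp
    next
      case 2
      then have kp: "k = p - 1" by simp
      have "?e!k = es!(p - 1)" "?e!Suc k = es!q" using nth[of k] nth[of "Suc k"] k 2 kp by auto
      then show ?thesis using c1 2 by simp
    next
      case 3
      then have "?e!k = es!(k - p + q)" "?e!Suc k = es!Suc (k - p + q)"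
        using nth[of k] nth[of "Suc k"] k by (auto simp: Suc_diff_le)
      moreover have "Suc (k - p + q) < length es" using k 3 len by linarith
      ultimately show ?thesis using W by simp
    qed
  qed
  have R: "\<forall>g\<in>set ?e. g \<in> R \<longrightarrow> g = f1 \<or> g = f2" using set w unfolding ewalk_def by blast
  have S: "set ?e \<subseteq> hE H" using set w unfolding ewalk_def by blast
  show ?thesis unfolding ewalk_def using ne hd last R S cons by (intro conjI)
qed

lemma not_distinct_nth:
  assumes "\<not> distinct xs" shows "\<exists>i j. i < j \<and> j < length xs \<and> xs!i = xs!j"
proof -
  obtain i j where ij: "i < length xs" "j < length xs" "i \<noteq> j" "xs!i = xs!j"
    using assms unfolding distinct_conv_nth by blast
  show ?thesis
  proof (cases "i < j")
    case True then show ?thesis using ij by blast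
  next
    case False then have "j < i" using ij(3) by simp
    then show ?thesis using ij by metis
  qed
qed

lemma ewalk_hpath:
  assumes "ewalk H R f1 f2 es" "hypergraph H"
  shows "\<exists>es vs. hpath H es vs \<and> hd es = f1 \<and> last es = f2 \<and> (\<forall>g\<in>set es. g \<in> R \<longrightarrow> g = f1 \<or> g = f2)"
  using assms(1)
proof (induction "length es" arbitrary: es rule: less_induct)
  case less
  note w = less.prems
  have W: "\<forall>i. Suc i < length es \<longrightarrow> es!i \<inter> es!Suc i \<noteq> {}" using w by (simp add: ewalk_def)
  show ?case
  proof (cases "distinct es")
    case False
    then obtain i j where ij: "i < j" "j < length es" "es!i = es!j"
      using not_distinct_nth by blast
    have "ewalk H R f1 f2 (take i es @ drop j es)"
    proof (rule ewalk_splice[OF w])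
      show "i \<le> j" "j < length es" using ij by auto
      show "es ! j = f1" if "i = 0" using that ij w unfolding ewalk_def by (metis hd_conv_nth)
      show "es ! (i - 1) \<inter> es ! j \<noteq> {}" if "0 < i"
      proof -
        have "Suc (i - 1) < length es" using that ij by simp
        then have "es!(i - 1) \<inter> es!Suc (i - 1) \<noteq> {}" using W by blast
        then show ?thesis using that ij by simp
      qed
    qed
    moreover have "length (take i es @ drop j es) < length es" using ij by simp
    ultimately show ?thesis using less.hyps by blast
  next
    case dist: True
    define vs where "vs = map (\<lambda>i. SOME v. v \<in> es!i \<and> v \<in> es!Suc i) [0..<length es - 1]"
    have lvs: "length vs = length es - 1" by (simp add: vs_def)
    have vsin: "vs!i \<in> es!i \<and> vs!i \<in> es!Suc i" if "i < length vs" for i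
    proof -
      have "Suc i < length es" using that lvs by simp
      then have "\<exists>v. v \<in> es!i \<and> v \<in> es!Suc i" using W by blast
      then show ?thesis using that by (simp add: vs_def) (rule someI_ex)
    qed
    show ?thesis
    proof (cases "distinct vs")
      case False
      then obtain i j where ij: "i < j" "j < length vs" "vs!i = vs!j"
        using not_distinct_nth by blast
      have "ewalk H R f1 f2 (take (Suc i) es @ drop (Suc j) es)"
      proof (rule ewalk_splice[OF w])
        show "Suc i \<le> Suc j" "Suc j < length es" using ij lvs by auto
        show "es ! (Suc i - 1) \<inter> es ! Suc j \<noteq> {}"
          using vsin[of i] vsin[of j] ij by auto
      qed simp
      moreover have "length (take (Suc i) es @ drop (Suc j) es) < length es" using ij lvs by simp
      ultimately show ?thesis using less.hyps by blast
    next
      case True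
      have ne: "es \<noteq> []" using w by (simp add: ewalk_def)
      have "set vs \<subseteq> hV H"
      proof
        fix v assume "v \<in> set vs"
        then obtain i where i: "i < length vs" "v = vs!i" by (metis in_set_conv_nth)
        then have "v \<in> es!i" using vsin by blast
        moreover have "es!i \<in> hE H" using w i lvs by (auto simp: ewalk_def)
        ultimately show "v \<in> hV H" using assms(2) unfolding hypergraph_def by blast
      qed
      moreover have "set es \<subseteq> hE H" using w unfolding ewalk_def by blast
      moreover have "length es = Suc (length vs)" using lvs ne by (cases es) auto
      moreover have "\<forall>i<length vs. vs ! i \<in> es ! i \<and> vs ! i \<in> es ! Suc i" using vsin by blast
      ultimately have "hpath H es vs" unfolding hpath_def using ne dist True by (intro conjI)
      then show ?thesis using w by (auto simp: ewalk_def)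
    qed
  qed
qed

lemma hconn_hpath:
  assumes "(hstep H R)\<^sup>*\<^sup>* x y" "f1 \<in> hE H" "x \<in> f1" "f2 \<in> hE H" "y \<in> f2" "hypergraph H"
  shows "\<exists>es vs. hpath H es vs \<and> hd es = f1 \<and> last es = f2 \<and> (\<forall>g\<in>set es. g \<in> R \<longrightarrow> g = f1 \<or> g = f2)"
  using ewalk_exists[OF assms(1-5)] ewalk_hpath assms(6) by blast


lemma card_fix2:
  assumes fin: "finite Idx" and ii: "i \<in> Idx" "i' \<in> Idx" "i \<noteq> i'"
  shows "card {g \<in> PiE Idx (\<lambda>_. {..<(L::nat)}). g i' = t' \<and> g i = t} \<le> L ^ (card Idx - 2)"
proof -
  let ?A = "{g \<in> PiE Idx (\<lambda>_. {..<(L::nat)}). g i' = t' \<and> g i = t}"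
  let ?B = "PiE (Idx - {i, i'}) (\<lambda>_. {..<L})"
  have inj: "inj_on (\<lambda>g. restrict g (Idx - {i, i'})) ?A"
  proof (rule inj_onI)
    fix g h assume g: "g \<in> ?A" and h: "h \<in> ?A" and eq: "restrict g (Idx - {i, i'}) = restrict h (Idx - {i, i'})"
    show "g = h"
    proof
      fix x
      show "g x = h x"
      proof (cases "x \<in> Idx")
        case True
        show ?thesis
        proof (cases "x = i \<or> x = i'")
          case xi: True
          have "g i = t" "h i = t" "g i' = t'" "h i' = t'" using g h by simp_all
          with xi show ?thesis by (elim disjE) simp_all
        next
          case False
          then have "restrict g (Idx - {i, i'}) x = restrict h (Idx - {i, i'}) x" using eq by simp
          then show ?thesis using False \<open>x \<in> Idx\<close> by simp
        qed
      next
        case False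
        have g1: "g \<in> PiE Idx (\<lambda>_. {..<L})" and h1: "h \<in> PiE Idx (\<lambda>_. {..<L})" using g h by simp_all
        show ?thesis using PiE_arb[OF g1 False] PiE_arb[OF h1 False] by simp
      qed
    qed
  qed
  have sub: "(\<lambda>g. restrict g (Idx - {i, i'})) ` ?A \<subseteq> ?B"
  proof (rule image_subsetI)
    fix g assume "g \<in> ?A"
    then have "\<forall>x\<in>Idx. g x < L" by (simp add: PiE_iff)
    then show "restrict g (Idx - {i, i'}) \<in> ?B" by (simp add: restrict_PiE_iff)
  qed
  have "card ?A \<le> card ?B"
    using card_inj_on_le[OF inj sub] fin by (simp add: finite_PiE)
  also have "card ?B = L ^ card (Idx - {i, i'})"
    using fin by (simp add: card_PiE)
  also have "card (Idx - {i, i'}) = card Idx - 2" using fin ii by (simp add: card_Diff_subset)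
  finally show ?thesis .
qed

lemma select:
  fixes Idx :: "'i set" and kill :: "'i \<times> nat \<Rightarrow> 'i \<times> nat \<Rightarrow> bool"
  assumes fin: "finite Idx"
    and deg: "\<And>c'. c' \<in> Idx \<times> {..<L} \<Longrightarrow> card {c \<in> Idx \<times> {..<L}. kill c' c} \<le> r"
    and big: "card Idx * r < L"
  shows "\<exists>g. (\<forall>i\<in>Idx. g i < L) \<and> (\<forall>i\<in>Idx. \<forall>i'\<in>Idx. i \<noteq> i' \<longrightarrow> \<not> kill (i', g i') (i, g i))"
proof (cases "card Idx \<le> 1")
  case True
  then have "\<forall>i\<in>Idx. \<forall>i'\<in>Idx. i = i'" using fin card_le_Suc0_iff_eq[of Idx] by simp
  moreover have "0 < L" using big by simp
  ultimately show ?thesis by (intro exI[of _ "\<lambda>_. 0"]) auto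
next
  case False
  define N where "N = card Idx"
  have N2: "2 \<le> N" using False N_def by simp
  have L0: "0 < L" using big by simp
  let ?P = "PiE Idx (\<lambda>_. {..<L})"
  let ?C = "Idx \<times> {..<L}"
  define Bad where "Bad = (\<Union>c'\<in>?C. \<Union>c\<in>{c \<in> ?C. kill c' c \<and> fst c \<noteq> fst c'}.
      {g \<in> ?P. g (fst c') = snd c' \<and> g (fst c) = snd c})"
  have cardP: "card ?P = L ^ N" using fin by (simp add: card_PiE N_def)
  have finC: "finite ?C" using fin by simp
  have "card Bad \<le> (\<Sum>c'\<in>?C. card (\<Union>c\<in>{c \<in> ?C. kill c' c \<and> fst c \<noteq> fst c'}.
      {g \<in> ?P. g (fst c') = snd c' \<and> g (fst c) = snd c}))"
    unfolding Bad_def by (rule card_UN_le[OF finC])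
  also have "\<dots> \<le> (\<Sum>c'\<in>?C. r * L ^ (N - 2))"
  proof (rule sum_mono)
    fix c' assume c': "c' \<in> ?C"
    let ?K = "{c \<in> ?C. kill c' c \<and> fst c \<noteq> fst c'}"
    have finK: "finite ?K" using finC by simp
    have "card (\<Union>c\<in>?K. {g \<in> ?P. g (fst c') = snd c' \<and> g (fst c) = snd c})
        \<le> (\<Sum>c\<in>?K. card {g \<in> ?P. g (fst c') = snd c' \<and> g (fst c) = snd c})"
      by (rule card_UN_le[OF finK])
    also have "\<dots> \<le> (\<Sum>c\<in>?K. L ^ (N - 2))"
    proof (rule sum_mono)
      fix c assume "c \<in> ?K"
      then show "card {g \<in> ?P. g (fst c') = snd c' \<and> g (fst c) = snd c} \<le> L ^ (N - 2)"
        using card_fix2[OF fin, of "fst c" "fst c'" L "snd c'" "snd c"] c' N_def by auto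
    qed
    also have "\<dots> = card ?K * L ^ (N - 2)" by simp
    also have "\<dots> \<le> r * L ^ (N - 2)"
    proof -
      have "card ?K \<le> card {c \<in> ?C. kill c' c}" by (rule card_mono) (use finC in auto)
      also have "\<dots> \<le> r" using deg[OF c'] .
      finally show ?thesis by simp
    qed
    finally show "card (\<Union>c\<in>?K. {g \<in> ?P. g (fst c') = snd c' \<and> g (fst c) = snd c}) \<le> r * L ^ (N - 2)" .
  qed
  also have "\<dots> = N * L * r * L ^ (N - 2)" using fin by (simp add: N_def card_cartesian_product)
  also have "\<dots> < L * L * L ^ (N - 2)"
  proof -
    have "N * r < L" using big N_def by simp
    then have "N * r * L < L * L" using L0 by simp
    then show ?thesis using L0 by (simp add: algebra_simps)
  qed
  also have "\<dots> = L ^ N"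
  proof -
    obtain k where k: "N = Suc (Suc k)" using N2 by (metis add_2_eq_Suc le_Suc_ex)
    then show ?thesis by simp
  qed
  finally have lt: "card Bad < card ?P" using cardP by simp
  have "\<not> ?P \<subseteq> Bad"
  proof
    assume "?P \<subseteq> Bad"
    moreover have "Bad \<subseteq> ?P" unfolding Bad_def by (intro UN_least) auto
    ultimately have "Bad = ?P" by (rule equalityI[rotated])
    then show False using lt by simp
  qed
  then obtain g where g: "g \<in> ?P" "g \<notin> Bad" by blast
  have "\<forall>i\<in>Idx. g i < L" using g(1) by (auto simp: PiE_iff)
  moreover have "\<forall>i\<in>Idx. \<forall>i'\<in>Idx. i \<noteq> i' \<longrightarrow> \<not> kill (i', g i') (i, g i)"
  proof (intro ballI impI notI)
    fix i i' assume i: "i \<in> Idx" "i' \<in> Idx" "i \<noteq> i'" "kill (i', g i') (i, g i)"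
    have c1: "(i', g i') \<in> ?C" and c2: "(i, g i) \<in> {c \<in> ?C. kill (i', g i') c \<and> fst c \<noteq> fst (i', g i')}"
      using i g(1) by (auto simp: PiE_iff)
    have c3: "g \<in> {h \<in> ?P. h (fst (i', g i')) = snd (i', g i') \<and> h (fst (i, g i)) = snd (i, g i)}"
      using g(1) by simp
    have "g \<in> Bad" unfolding Bad_def
      by (rule UN_I[OF c1], rule UN_I[OF c2], rule c3)
    then show False using g(2) by simp
  qed
  ultimately show ?thesis by (intro exI[of _ g] conjI)
qed


lemma blk_div: "off < (s::nat) \<Longrightarrow> (I * s + off) div s = I"
  by (rule div_nat_eqI) (auto simp: algebra_simps)

lemma blk_mod: "off < (s::nat) \<Longrightarrow> (I * s + off) mod s = off"
  by (simp add: mod_add_left_eq[symmetric] mod_mult_self2_is_0)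

lemma blk_inj: "off1 < (s::nat) \<Longrightarrow> off2 < s \<Longrightarrow> I * s + off1 = J * s + off2 \<Longrightarrow> I = J \<and> off1 = off2"
  by (metis blk_div blk_mod)

locale constr =
  fixes H :: "'v hypergraph" and n m :: nat and \<nu> :: "nat \<times> nat \<Rightarrow> 'v set"
  assumes hyp: "hypergraph H" and finV: "finite (hV H)" and neV: "hV H \<noteq> {}" and red: "reduced H"
    and n1: "n \<ge> 1" and mdef: "m = 4 * hrank H ^ 6 * n ^ 5"
    and mm: "minor_map (grid m) (primal_graph H) \<nu>"
begin

abbreviation "r \<equiv> hrank H"
definition "Vm = {0..<m} \<times> {0..<m}"
definition "s = m div n"
definition "blk y = min (y div s) (n - 1)"
definition "Idx = {(d, I, J). I < n \<and> J < n \<and> (if d then Suc J < n else Suc I < n)}"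
definition "N = card Idx"
definition "S = N * r"
definition "L = N * r + 1"

lemma finE: "finite (hE H)"
  using hyp finV unfolding hypergraph_def by (meson finite_Pow_iff finite_subset)

lemma card_le_r: "e \<in> hE H \<Longrightarrow> card e \<le> r"
  unfolding hrank_def using finE by (intro Max_ge) auto

lemma r_pos: "1 \<le> r"
proof -
  obtain x where x: "x \<in> hV H" using neV by blast
  then obtain e where e: "e \<in> hE H" "x \<in> e" using red unfolding reduced_def by blast
  have "e \<subseteq> hV H" using e hyp unfolding hypergraph_def by blast
  then have "finite e" using finV finite_subset by blast
  then have "1 \<le> card e" using e(2) by (metis One_nat_def Suc_leI card_gt_0_iff empty_iff)
  then show ?thesis using card_le_r[OF e(1)] by simp
qed

lemma Idx_fin: "finite Idx"
proof -
  have "Idx \<subseteq> UNIV \<times> {..<n} \<times> {..<n}" unfolding Idx_def by auto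
  then show ?thesis by (rule finite_subset) simp
qed

lemma s_eq: "s = 4 * r ^ 6 * n ^ 4"
proof -
  have "n ^ 5 = n * n ^ 4" by (subst power_Suc[symmetric]) simp
  then have "m = n * (4 * r ^ 6 * n ^ 4)" using mdef by (simp add: mult_ac)
  then show ?thesis unfolding s_def using n1 by simp
qed

lemma s_pos: "0 < s"
  using s_eq r_pos n1 by simp

lemma ns_le: "n * s \<le> m"
  unfolding s_def by simp

lemma s_big: "2 * N * r + 2 \<le> s"
proof (cases "n = 1")
  case True
  then have "Idx = {}" unfolding Idx_def by auto
  then have "N = 0" unfolding N_def by simp
  moreover have "4 \<le> s" using s_eq r_pos True by simp
  ultimately show ?thesis by simp
next
  case False
  then have n2: "2 \<le> n" using n1 by simp
  have "Idx \<subseteq> UNIV \<times> {..<n} \<times> {..<n}" unfolding Idx_def by auto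
  then have "N \<le> card (UNIV \<times> {..<n} \<times> {..<n} :: (bool \<times> nat \<times> nat) set)"
    unfolding N_def by (intro card_mono) auto
  also have "\<dots> = 2 * (n * n)" by (simp add: card_cartesian_product card_UNIV_bool)
  finally have NN: "N \<le> 2 * (n * n)" .
  have "2 * N * r + 2 \<le> 4 * (n * n) * r + 2" using NN by simp
  also have "\<dots> \<le> 16 * (n * n) * r"
  proof -
    have "1 \<le> n * n * r" using n2 r_pos by simp
    then show ?thesis by simp
  qed
  also have "\<dots> \<le> 4 * (n * n) * (n * n) * r"
  proof -
    have "4 \<le> n * n" using mult_le_mono[OF n2 n2] by simp
    then have "16 * (n * n) \<le> 4 * (n * n) * (n * n)" by simp
    then show ?thesis by (rule mult_right_mono) simp
  qed
  also have "\<dots> \<le> 4 * (n * n) * (n * n) * r ^ 6"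
  proof -
    have "r \<le> r ^ 6" using r_pos by (simp add: self_le_power)
    then show ?thesis by simp
  qed
  also have "\<dots> = s" using s_eq by (simp add: power4_eq_xxxx mult_ac)
  finally show ?thesis .
qed

lemma LS_s: "L + S + 1 \<le> s" using s_big unfolding L_def S_def by simp
lemma s_le_m: "s \<le> m" unfolding s_def by simp
lemma Nr_m: "N * r < m" using s_big s_le_m by simp

end


context constr begin

definition "sp i t k = (case i of (d, I, J) \<Rightarrow>
   if d then (I * s + t, J * s + (s - Suc k)) else (I * s + (s - Suc k), J * s + t))"
definition "bp i t = (case i of (d, I, J) \<Rightarrow> if d then (I * s + t, Suc J * s) else (Suc I * s, J * s + t))"
definition "blkof a = (blk (fst a), blk (snd a))"
definition "ends i = (case i of (d, I, J) \<Rightarrow> ((I, J), if d then (I, Suc J) else (Suc I, J)))"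
definition "lineval i t k = (if fst i then snd (sp i t k) else fst (sp i t k))"
definition "proj i a = (if fst i then snd a else fst a)"

lemma blk_eq: "I < n \<Longrightarrow> off < s \<Longrightarrow> blk (I * s + off) = I"
  unfolding blk_def using blk_div[of off s I] by simp

lemma coord_lt: "I < n \<Longrightarrow> off < s \<Longrightarrow> I * s + off < m"
proof -
  assume a: "I < n" "off < s"
  have "I * s + off < I * s + s" using a by simp
  also have "\<dots> = Suc I * s" by simp
  also have "\<dots> \<le> n * s" using a by (intro mult_right_mono) auto
  also have "\<dots> \<le> m" by (rule ns_le)
  finally show ?thesis .
qed

lemma t_lt: "t < L \<Longrightarrow> t < s" using LS_s by simp
lemma k_lt: "k \<le> S \<Longrightarrow> s - Suc k < s" using s_pos by simp
lemma k_ge: "k \<le> S \<Longrightarrow> L \<le> s - Suc k" using LS_s by simp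

lemma Idx_cases:
  assumes "i \<in> Idx"
  obtains (V) I J where "i = (False, I, J)" "Suc I < n" "J < n"
    | (Ho) I J where "i = (True, I, J)" "I < n" "Suc J < n"
  using assms unfolding Idx_def by (cases i) (auto split: if_splits)

lemma sp_Vm: "i \<in> Idx \<Longrightarrow> t < L \<Longrightarrow> k \<le> S \<Longrightarrow> sp i t k \<in> Vm"
  by (erule Idx_cases) (auto simp: sp_def Vm_def intro!: coord_lt t_lt k_lt)

lemma sp_blk: "i \<in> Idx \<Longrightarrow> t < L \<Longrightarrow> k \<le> S \<Longrightarrow> blkof (sp i t k) = fst (ends i)"
  by (erule Idx_cases) (auto simp: sp_def blkof_def ends_def intro!: blk_eq t_lt k_lt)

lemma bp_Vm: "i \<in> Idx \<Longrightarrow> t < L \<Longrightarrow> bp i t \<in> Vm"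
proof (erule Idx_cases)
  fix I J assume a: "i = (False, I, J)" "Suc I < n" "J < n" "t < L"
  have "Suc I * s + 0 < m" by (rule coord_lt) (use a s_pos in auto)
  then show ?thesis using a coord_lt[of J t] t_lt[of t] by (auto simp: bp_def Vm_def)
next
  fix I J assume a: "i = (True, I, J)" "I < n" "Suc J < n" "t < L"
  have "Suc J * s + 0 < m" by (rule coord_lt) (use a s_pos in auto)
  then show ?thesis using a coord_lt[of I t] t_lt[of t] by (auto simp: bp_def Vm_def)
qed

lemma bp_blk: "i \<in> Idx \<Longrightarrow> t < L \<Longrightarrow> blkof (bp i t) = snd (ends i)"
proof (erule Idx_cases)
  fix I J assume a: "i = (False, I, J)" "Suc I < n" "J < n" "t < L"
  have "blk (Suc I * s + 0) = Suc I" by (rule blk_eq) (use a s_pos in auto)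
  then show ?thesis using a blk_eq[of J t] t_lt[of t] by (auto simp: bp_def blkof_def ends_def)
next
  fix I J assume a: "i = (True, I, J)" "I < n" "Suc J < n" "t < L"
  have "blk (Suc J * s + 0) = Suc J" by (rule blk_eq) (use a s_pos in auto)
  then show ?thesis using a blk_eq[of I t] t_lt[of t] by (auto simp: bp_def blkof_def ends_def)
qed

lemma sp_bp_edge: "i \<in> Idx \<Longrightarrow> t < L \<Longrightarrow> {sp i t 0, bp i t} \<in> snd (grid m)"
proof (erule Idx_cases)
  fix I J assume a: "i = (False, I, J)" "Suc I < n" "J < n" "t < L"
  have m1: "Suc I * s + 0 < m" by (rule coord_lt) (use a s_pos in auto)
  have m2: "J * s + t < m" using a coord_lt t_lt by simp
  have e: "Suc (I * s + (s - Suc 0)) = Suc I * s" using s_pos by simp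
  have "{(I * s + (s - Suc 0), J * s + t), (Suc (I * s + (s - Suc 0)), J * s + t)} \<in> snd (grid m)"
    by (rule grid_edge_v) (use m1 m2 e in simp_all)
  then show ?thesis using a e by (simp add: sp_def bp_def)
next
  fix I J assume a: "i = (True, I, J)" "I < n" "Suc J < n" "t < L"
  have m1: "Suc J * s + 0 < m" by (rule coord_lt) (use a s_pos in auto)
  have m2: "I * s + t < m" using a coord_lt t_lt by simp
  have e: "Suc (J * s + (s - Suc 0)) = Suc J * s" using s_pos by simp
  have "{(I * s + t, J * s + (s - Suc 0)), (I * s + t, Suc (J * s + (s - Suc 0)))} \<in> snd (grid m)"
    by (rule grid_edge_h) (use m1 m2 e in simp_all)
  then show ?thesis using a e by (simp add: sp_def bp_def)
qed

lemma sp_step_edge: "i \<in> Idx \<Longrightarrow> t < L \<Longrightarrow> k < S \<Longrightarrow> {sp i t (Suc k), sp i t k} \<in> snd (grid m)"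
proof (erule Idx_cases)
  fix I J assume a: "i = (False, I, J)" "Suc I < n" "J < n" "t < L" "k < S"
  have m1: "I * s + (s - Suc k) < m" using a coord_lt k_lt by simp
  have m2: "J * s + t < m" using a coord_lt t_lt by simp
  have e: "Suc (I * s + (s - Suc (Suc k))) = I * s + (s - Suc k)" using a LS_s by simp
  have "{(I * s + (s - Suc (Suc k)), J * s + t), (Suc (I * s + (s - Suc (Suc k))), J * s + t)} \<in> snd (grid m)"
    by (rule grid_edge_v) (use m1 m2 e in simp_all)
  then have "{(I * s + (s - Suc (Suc k)), J * s + t), (I * s + (s - Suc k), J * s + t)} \<in> snd (grid m)"
    unfolding e .
  then show ?thesis using a by (simp add: sp_def)
next
  fix I J assume a: "i = (True, I, J)" "I < n" "Suc J < n" "t < L" "k < S"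
  have m1: "J * s + (s - Suc k) < m" using a coord_lt k_lt by simp
  have m2: "I * s + t < m" using a coord_lt t_lt by simp
  have e: "Suc (J * s + (s - Suc (Suc k))) = J * s + (s - Suc k)" using a LS_s by simp
  have "{(I * s + t, J * s + (s - Suc (Suc k))), (I * s + t, Suc (J * s + (s - Suc (Suc k))))} \<in> snd (grid m)"
    by (rule grid_edge_h) (use m1 m2 e in simp_all)
  then have "{(I * s + t, J * s + (s - Suc (Suc k))), (I * s + t, J * s + (s - Suc k))} \<in> snd (grid m)"
    unfolding e .
  then show ?thesis using a by (simp add: sp_def)
qed

lemma sp_inj:
  assumes "i \<in> Idx" "i' \<in> Idx" "t < L" "t' < L" "k \<le> S" "k' \<le> S" "sp i t k = sp i' t' k'"
  shows "i = i' \<and> t = t'"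
proof -
  have o: "t < s" "t' < s" "s - Suc k < s" "s - Suc k' < s" "L \<le> s - Suc k" "L \<le> s - Suc k'"
    using assms t_lt k_lt k_ge by auto
  show ?thesis
  using assms(1) proof (cases rule: Idx_cases)
    case (V I J)
    note a = this
    show ?thesis using assms(2) proof (cases rule: Idx_cases)
      case (V I' J')
      then have "I * s + (s - Suc k) = I' * s + (s - Suc k')" "J * s + t = J' * s + t'"
        using a assms(7) by (simp_all add: sp_def)
      then show ?thesis using blk_inj o a V by metis
    next
      case (Ho I' J')
      then have "J * s + t = J' * s + (s - Suc k')"
        using a assms(7) by (simp_all add: sp_def)
      then have "t = s - Suc k'" using blk_inj o by metis
      then show ?thesis using o assms(3) by simp
    qed
  next
    case (Ho I J)
    note a = this
    show ?thesis using assms(2) proof (cases rule: Idx_cases)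
      case (Ho I' J')
      then have "J * s + (s - Suc k) = J' * s + (s - Suc k')" "I * s + t = I' * s + t'"
        using a assms(7) by (simp_all add: sp_def)
      then show ?thesis using blk_inj o a Ho by metis
    next
      case (V I' J')
      then have "I * s + t = I' * s + (s - Suc k')"
        using a assms(7) by (simp_all add: sp_def)
      then have "t = s - Suc k'" using blk_inj o by metis
      then show ?thesis using o assms(3) by simp
    qed
  qed
qed

end


context constr begin

lemma lineval_inj: "i \<in> Idx \<Longrightarrow> t < L \<Longrightarrow> k \<le> S \<Longrightarrow> k' \<le> S \<Longrightarrow> lineval i t k = lineval i t k' \<Longrightarrow> k = k'"
proof (erule Idx_cases)
  fix I J assume a: "i = (False, I, J)" "t < L" "k \<le> S" "k' \<le> S" "lineval i t k = lineval i t k'"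
  then have "I * s + (s - Suc k) = I * s + (s - Suc k')" by (simp add: lineval_def sp_def)
  then show "k = k'" using a LS_s by simp
next
  fix I J assume a: "i = (True, I, J)" "t < L" "k \<le> S" "k' \<le> S" "lineval i t k = lineval i t k'"
  then have "J * s + (s - Suc k) = J * s + (s - Suc k')" by (simp add: lineval_def sp_def)
  then show "k = k'" using a LS_s by simp
qed

lemma proj_sp: "proj i (sp i t k) = lineval i t k"
  by (simp add: proj_def lineval_def)

lemma Vm_grid: "fst (grid m) = Vm" by (simp add: grid_def Vm_def)
lemma V_primal: "fst (primal_graph H) = hV H" by (simp add: primal_graph_def)

lemma mm_conn: "a \<in> Vm \<Longrightarrow> connected_in (primal_graph H) (\<nu> a)"
  using mm unfolding minor_map_def Vm_grid by blast
lemma mm_disj: "a \<in> Vm \<Longrightarrow> b \<in> Vm \<Longrightarrow> a \<noteq> b \<Longrightarrow> \<nu> a \<inter> \<nu> b = {}"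
  using mm unfolding minor_map_def Vm_grid by blast
lemma mm_adj: "{a, b} \<in> snd (grid m) \<Longrightarrow> \<exists>x\<in>\<nu> a. \<exists>y\<in>\<nu> b. {x, y} \<in> snd (primal_graph H)"
  using mm unfolding minor_map_def by blast
lemma mm_cover: "\<Union> (\<nu> ` Vm) = hV H"
  using mm unfolding minor_map_def Vm_grid V_primal by blast
lemma nu_sub: "a \<in> Vm \<Longrightarrow> \<nu> a \<subseteq> hV H"
  using mm_conn unfolding connected_in_def V_primal by blast
lemma nu_ne: "a \<in> Vm \<Longrightarrow> \<nu> a \<noteq> {}"
  using mm_conn unfolding connected_in_def by blast

lemma mm_adj_edge: "{a, b} \<in> snd (grid m) \<Longrightarrow> \<exists>x\<in>\<nu> a. \<exists>y\<in>\<nu> b. \<exists>e\<in>hE H. x \<in> e \<and> y \<in> e"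
  using mm_adj primal_edge by metis

definition "cand = Idx \<times> {..<L}"
definition "w c = (SOME g. g \<in> hE H \<and> g \<inter> \<nu> (sp (fst c) (snd c) 0) \<noteq> {} \<and> g \<inter> \<nu> (bp (fst c) (snd c)) \<noteq> {})"
definition "D f = {a \<in> Vm. \<nu> a \<inter> f \<noteq> {}}"
definition "Seg c = sp (fst c) (snd c) ` {..S}"
definition "kill c' c \<longleftrightarrow> D (w c') \<inter> Seg c \<noteq> {}"

lemma w_prop:
  assumes "i \<in> Idx" "t < L"
  shows "w (i, t) \<in> hE H \<and> w (i, t) \<inter> \<nu> (sp i t 0) \<noteq> {} \<and> w (i, t) \<inter> \<nu> (bp i t) \<noteq> {}"
proof -
  obtain x y e where "x \<in> \<nu> (sp i t 0)" "y \<in> \<nu> (bp i t)" "e \<in> hE H" "x \<in> e" "y \<in> e"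
    using mm_adj_edge[OF sp_bp_edge[OF assms]] by blast
  then have "\<exists>g. g \<in> hE H \<and> g \<inter> \<nu> (sp i t 0) \<noteq> {} \<and> g \<inter> \<nu> (bp i t) \<noteq> {}" by blast
  then show ?thesis unfolding w_def fst_conv snd_conv by (rule someI_ex)
qed

lemma finVm: "finite Vm" unfolding Vm_def by simp

lemma D_card: assumes "f \<in> hE H" shows "card (D f) \<le> r"
proof -
  define pick where "pick a = (SOME x. x \<in> \<nu> a \<inter> f)" for a
  have pk: "pick a \<in> \<nu> a \<inter> f" if "a \<in> D f" for a
  proof -
    have "\<exists>x. x \<in> \<nu> a \<inter> f" using that unfolding D_def by blast
    then show ?thesis unfolding pick_def by (rule someI_ex)
  qed
  have "inj_on pick (D f)"
  proof (rule inj_onI)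
    fix a b assume ab: "a \<in> D f" "b \<in> D f" "pick a = pick b"
    show "a = b"
    proof (rule ccontr)
      assume "a \<noteq> b"
      then have "\<nu> a \<inter> \<nu> b = {}" using mm_disj ab unfolding D_def by blast
      then show False using pk[OF ab(1)] pk[OF ab(2)] ab(3) by auto
    qed
  qed
  moreover have "pick ` D f \<subseteq> f" using pk by blast
  moreover have "finite f" using assms hyp finV unfolding hypergraph_def by (meson PowD finite_subset subsetD)
  ultimately have "card (D f) \<le> card f" by (meson card_inj_on_le)
  also have "\<dots> \<le> r" using card_le_r[OF assms] .
  finally show ?thesis .
qed

lemma D_sub: "D f \<subseteq> Vm" unfolding D_def by blast

lemma kill_deg: assumes "c' \<in> cand" shows "card {c \<in> cand. kill c' c} \<le> r"
proof -
  let ?K = "{c \<in> cand. kill c' c}"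
  define pick where "pick c = (SOME p. p \<in> D (w c') \<inter> Seg c)" for c
  have pk: "pick c \<in> D (w c') \<inter> Seg c" if "c \<in> ?K" for c
  proof -
    have "\<exists>p. p \<in> D (w c') \<inter> Seg c" using that unfolding kill_def by blast
    then show ?thesis unfolding pick_def by (rule someI_ex)
  qed
  have "inj_on pick ?K"
  proof (rule inj_onI)
    fix c1 c2 assume c: "c1 \<in> ?K" "c2 \<in> ?K" "pick c1 = pick c2"
    obtain k1 where k1: "k1 \<le> S" "pick c1 = sp (fst c1) (snd c1) k1" using pk[OF c(1)] unfolding Seg_def by auto
    obtain k2 where k2: "k2 \<le> S" "pick c2 = sp (fst c2) (snd c2) k2" using pk[OF c(2)] unfolding Seg_def by auto
    have "fst c1 = fst c2 \<and> snd c1 = snd c2"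
      by (rule sp_inj[of _ _ _ _ k1 k2]) (use c k1 k2 in \<open>auto simp: cand_def\<close>)
    then show "c1 = c2" by (simp add: prod_eq_iff)
  qed
  moreover have "pick ` ?K \<subseteq> D (w c')" using pk by blast
  moreover have "finite (D (w c'))" using finVm D_sub finite_subset by blast
  ultimately have "card ?K \<le> card (D (w c'))" by (meson card_inj_on_le)
  also have "\<dots> \<le> r"
    using D_card w_prop assms unfolding cand_def by (metis SigmaE lessThan_iff)
  finally show ?thesis .
qed

lemma exists_g: "\<exists>g. (\<forall>i\<in>Idx. g i < L) \<and> (\<forall>i\<in>Idx. \<forall>i'\<in>Idx. i \<noteq> i' \<longrightarrow> \<not> kill (i', g i') (i, g i))"
proof (rule select[OF Idx_fin])
  fix c' assume "c' \<in> Idx \<times> {..<L}"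
  then show "card {c \<in> Idx \<times> {..<L}. kill c' c} \<le> r" using kill_deg unfolding cand_def by simp
next
  show "card Idx * r < L" unfolding L_def N_def by simp
qed

end


context constr begin

lemma row_path:
  assumes "y < m" "x1 < m" "x2 < m" "\<And>x. min x1 x2 \<le> x \<Longrightarrow> x \<le> max x1 x2 \<Longrightarrow> (y, x) \<in> A"
  shows "(Rin (grid m) A)\<^sup>*\<^sup>* (y, x1) (y, x2)"
proof -
  have gen: "(Rin (grid m) A)\<^sup>*\<^sup>* (y, a) (y, b)" if ab: "a \<le> b" "b < m" "\<And>x. a \<le> x \<Longrightarrow> x \<le> b \<Longrightarrow> (y, x) \<in> A" for a b
  proof -
    have "(Rin (grid m) A)\<^sup>*\<^sup>* ((\<lambda>x. (y, x)) a) ((\<lambda>x. (y, x)) b)"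
    proof (rule chain_rtr[OF _ ab(1)])
      fix k assume k: "a \<le> k" "k < b"
      have "{(y, k), (y, Suc k)} \<in> snd (grid m)" by (rule grid_edge_h) (use k ab assms(1) in simp_all)
      then show "Rin (grid m) A (y, k) (y, Suc k)" unfolding Rin_def using ab k by simp
    qed
    then show ?thesis by simp
  qed
  show ?thesis
  proof (cases "x1 \<le> x2")
    case True then show ?thesis using gen[of x1 x2] assms by simp
  next
    case False
    then have "(Rin (grid m) A)\<^sup>*\<^sup>* (y, x2) (y, x1)" using gen[of x2 x1] assms by simp
    then show ?thesis by (rule Rin_rtr_sym)
  qed
qed

lemma col_path:
  assumes "x < m" "y1 < m" "y2 < m" "\<And>y. min y1 y2 \<le> y \<Longrightarrow> y \<le> max y1 y2 \<Longrightarrow> (y, x) \<in> A"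
  shows "(Rin (grid m) A)\<^sup>*\<^sup>* (y1, x) (y2, x)"
proof -
  have gen: "(Rin (grid m) A)\<^sup>*\<^sup>* (a, x) (b, x)" if ab: "a \<le> b" "b < m" "\<And>y. a \<le> y \<Longrightarrow> y \<le> b \<Longrightarrow> (y, x) \<in> A" for a b
  proof -
    have "(Rin (grid m) A)\<^sup>*\<^sup>* ((\<lambda>y. (y, x)) a) ((\<lambda>y. (y, x)) b)"
    proof (rule chain_rtr[OF _ ab(1)])
      fix k assume k: "a \<le> k" "k < b"
      have "{(k, x), (Suc k, x)} \<in> snd (grid m)" by (rule grid_edge_v) (use k ab assms(1) in simp_all)
      then show "Rin (grid m) A (k, x) (Suc k, x)" unfolding Rin_def using ab k by simp
    qed
    then show ?thesis by simp
  qed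
  show ?thesis
  proof (cases "y1 \<le> y2")
    case True then show ?thesis using gen[of y1 y2] assms by simp
  next
    case False
    then have "(Rin (grid m) A)\<^sup>*\<^sup>* (y2, x) (y1, x)" using gen[of y2 y1] assms by simp
    then show ?thesis by (rule Rin_rtr_sym)
  qed
qed

end

locale chosen = constr +
  fixes g :: "bool \<times> nat \<times> nat \<Rightarrow> nat"
  assumes g_lt: "\<forall>i\<in>Idx. g i < L"
    and g_nk: "\<forall>i\<in>Idx. \<forall>i'\<in>Idx. i \<noteq> i' \<longrightarrow> \<not> kill (i', g i') (i, g i)"
begin

definition "f i = w (i, g i)"
definition "R = f ` Idx"
definition "Dam = (\<Union>i\<in>Idx. D (f i))"
definition "CL = {a \<in> Vm. \<forall>i\<in>Idx. \<nu> a \<inter> f i = {}}"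

lemma f_prop: "i \<in> Idx \<Longrightarrow> f i \<in> hE H \<and> f i \<inter> \<nu> (sp i (g i) 0) \<noteq> {} \<and> f i \<inter> \<nu> (bp i (g i)) \<noteq> {}"
  unfolding f_def using w_prop g_lt by blast

lemma sp0_D: "i \<in> Idx \<Longrightarrow> sp i (g i) 0 \<in> D (f i)"
  unfolding D_def using f_prop sp_Vm g_lt by blast

lemma priv_sp: "i \<in> Idx \<Longrightarrow> i' \<in> Idx \<Longrightarrow> i \<noteq> i' \<Longrightarrow> k \<le> S \<Longrightarrow> sp i (g i) k \<notin> D (f i')"
  using g_nk unfolding kill_def Seg_def f_def by auto

lemma f_inj: "inj_on f Idx"
proof (rule inj_onI)
  fix i i' assume a: "i \<in> Idx" "i' \<in> Idx" "f i = f i'"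
  show "i = i'"
  proof (rule ccontr)
    assume "i \<noteq> i'"
    then have "sp i (g i) 0 \<notin> D (f i')" using priv_sp a by simp
    then show False using sp0_D[OF a(1)] a(3) by simp
  qed
qed

lemma Dam_sub: "Dam \<subseteq> Vm" unfolding Dam_def using D_sub by blast
lemma Dam_fin: "finite Dam" using Dam_sub finVm finite_subset by blast

lemma Dam_card: "card Dam \<le> N * r"
proof -
  have "card Dam \<le> (\<Sum>i\<in>Idx. card (D (f i)))" unfolding Dam_def by (rule card_UN_le[OF Idx_fin])
  also have "\<dots> \<le> (\<Sum>i\<in>Idx. r)" by (rule sum_mono) (use D_card f_prop in blast)
  also have "\<dots> = N * r" by (simp add: N_def)
  finally show ?thesis .
qed

lemma free_row: "\<exists>w0<m. \<forall>a\<in>Dam. fst a \<noteq> w0"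
proof (rule ccontr)
  assume "\<not> ?thesis"
  then have "{..<m} \<subseteq> fst ` Dam" by force
  then have "m \<le> card (fst ` Dam)" using Dam_fin by (metis card_lessThan card_mono finite_imageI)
  also have "\<dots> \<le> card Dam" using Dam_fin by (rule card_image_le)
  finally show False using Dam_card Nr_m by simp
qed

lemma free_col: "\<exists>z<m. \<forall>a\<in>Dam. snd a \<noteq> z"
proof (rule ccontr)
  assume "\<not> ?thesis"
  then have "{..<m} \<subseteq> snd ` Dam" by force
  then have "m \<le> card (snd ` Dam)" using Dam_fin by (metis card_lessThan card_mono finite_imageI)
  also have "\<dots> \<le> card Dam" using Dam_fin by (rule card_image_le)
  finally show False using Dam_card Nr_m by simp
qed

lemma free_line: assumes "i \<in> Idx" shows "\<exists>k\<le>S. \<forall>a\<in>Dam. proj i a \<noteq> lineval i (g i) k"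
proof (rule ccontr)
  assume "\<not> ?thesis"
  then have sub: "lineval i (g i) ` {..S} \<subseteq> proj i ` Dam" by force
  have inj: "inj_on (lineval i (g i)) {..S}"
    using lineval_inj[OF assms g_lt[rule_format, OF assms]] by (auto intro: inj_onI)
  have "Suc S = card (lineval i (g i) ` {..S})" using card_image[OF inj] by simp
  also have "\<dots> \<le> card (proj i ` Dam)" using sub Dam_fin by (intro card_mono) auto
  also have "\<dots> \<le> card Dam" using Dam_fin by (rule card_image_le)
  finally show False using Dam_card unfolding S_def by simp
qed

lemma clean_I: "a \<in> Vm \<Longrightarrow> (\<And>i. i \<in> Idx \<Longrightarrow> a \<notin> D (f i)) \<Longrightarrow> a \<in> CL"
  unfolding CL_def D_def by blast

lemma notDam_clean: "a \<in> Vm \<Longrightarrow> a \<notin> Dam \<Longrightarrow> a \<in> CL"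
  by (rule clean_I) (auto simp: Dam_def)

lemma CL_Vm: "CL \<subseteq> Vm" unfolding CL_def by blast

lemma hstep_sym: "hstep H R x y \<Longrightarrow> hstep H R y x"
  unfolding hstep_def by blast

lemma hstep_rtr_sym: "(hstep H R)\<^sup>*\<^sup>* x y \<Longrightarrow> (hstep H R)\<^sup>*\<^sup>* y x"
  by (rule rtranclp_sym_rel[OF hstep_sym])

lemma notR: "e \<inter> \<nu> a \<noteq> {} \<Longrightarrow> a \<in> CL \<Longrightarrow> e \<notin> R"
  unfolding CL_def R_def by blast

lemma clean_inner: assumes "a \<in> CL" "x \<in> \<nu> a" "y \<in> \<nu> a" shows "(hstep H R)\<^sup>*\<^sup>* x y"
proof -
  have a: "a \<in> Vm" using assms CL_Vm by blast
  have "(Rin (primal_graph H) (\<nu> a))\<^sup>*\<^sup>* x y" using mm_conn[OF a] assms unfolding connected_in_Rin by blast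
  then show ?thesis
  proof (rule rtranclp_mono[THEN predicate2D, rotated])
    show "Rin (primal_graph H) (\<nu> a) \<le> hstep H R"
    proof (intro predicate2I)
      fix u v assume "Rin (primal_graph H) (\<nu> a) u v"
      then have uv: "u \<in> \<nu> a" "v \<in> \<nu> a" "{u, v} \<in> snd (primal_graph H)" unfolding Rin_def by auto
      then obtain e where e: "e \<in> hE H" "u \<in> e" "v \<in> e" using primal_edge by metis
      have "e \<notin> R" using notR[of e a] e uv assms(1) by blast
      then show "hstep H R u v" unfolding hstep_def using e by blast
    qed
  qed
qed

lemma clean_adj: assumes "b \<in> CL" "{a, b} \<in> snd (grid m)" shows "\<exists>x\<in>\<nu> a. \<exists>y\<in>\<nu> b. hstep H R x y"
proof -
  obtain x y e where xy: "x \<in> \<nu> a" "y \<in> \<nu> b" "e \<in> hE H" "x \<in> e" "y \<in> e" using mm_adj_edge[OF assms(2)] by blast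
  have "e \<notin> R" using notR[of e b] xy assms(1) by blast
  then show ?thesis unfolding hstep_def using xy by blast
qed

lemma clean_lift:
  assumes "(Rin (grid m) CL)\<^sup>*\<^sup>* a b" "a \<in> CL"
  shows "\<forall>x\<in>\<nu> a. \<forall>y\<in>\<nu> b. (hstep H R)\<^sup>*\<^sup>* x y"
proof (rule lift_conn[OF _ _ _ assms])
  show "\<And>a x y. a \<in> CL \<Longrightarrow> x \<in> \<nu> a \<Longrightarrow> y \<in> \<nu> a \<Longrightarrow> (hstep H R)\<^sup>*\<^sup>* x y" by (rule clean_inner)
  show "\<exists>x\<in>\<nu> a. \<exists>y\<in>\<nu> b. (hstep H R)\<^sup>*\<^sup>* x y" if "a \<in> CL" "b \<in> CL" "{a, b} \<in> snd (grid m)" for a b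
    using clean_adj[OF that(2,3)] by blast
  show "\<nu> a \<noteq> {}" if "a \<in> CL" for a using that CL_Vm nu_ne by blast
qed

lemma priv_comp:
  assumes i: "i \<in> Idx" and p: "p \<in> D (f i)" and pr: "\<And>i'. i' \<in> Idx \<Longrightarrow> i' \<noteq> i \<Longrightarrow> p \<notin> D (f i')"
  shows "\<forall>z\<in>\<nu> p. \<exists>y\<in>f i. (hstep H R)\<^sup>*\<^sup>* y z"
proof
  fix z assume z: "z \<in> \<nu> p"
  have pV: "p \<in> Vm" using p unfolding D_def by blast
  obtain x0 where x0: "x0 \<in> \<nu> p" "x0 \<in> f i" using p unfolding D_def by blast
  have "(Rin (primal_graph H) (\<nu> p))\<^sup>*\<^sup>* x0 z" using mm_conn[OF pV] x0 z unfolding connected_in_Rin by blast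
  then show "\<exists>y\<in>f i. (hstep H R)\<^sup>*\<^sup>* y z"
  proof induction
    case base then show ?case using x0 by blast
  next
    case (step u v)
    then obtain y where y: "y \<in> f i" "(hstep H R)\<^sup>*\<^sup>* y u" by blast
    have uv: "u \<in> \<nu> p" "v \<in> \<nu> p" "{u, v} \<in> snd (primal_graph H)" using step(2) unfolding Rin_def by auto
    then obtain e where e: "e \<in> hE H" "u \<in> e" "v \<in> e" using primal_edge by metis
    show ?case
    proof (cases "e \<in> R")
      case True
      then obtain i' where i': "i' \<in> Idx" "e = f i'" unfolding R_def by blast
      then have "p \<in> D (f i')" using pV uv e unfolding D_def by blast
      then have "i' = i" using pr i' by blast
      then show ?thesis using e i' by blast
    next
      case False
      then have "hstep H R u v" unfolding hstep_def using e by blast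
      then show ?thesis using y by (meson rtranclp.rtrancl_into_rtrancl)
    qed
  qed
qed

end


context chosen begin

lemma anchor:
  assumes i: "i \<in> Idx" and w0: "w0 < m" "\<forall>a\<in>Dam. fst a \<noteq> w0" and z: "z < m" "\<forall>a\<in>Dam. snd a \<noteq> z"
    and x0: "x0 \<in> \<nu> (w0, z)"
  shows "\<exists>y\<in>f i. (hstep H R)\<^sup>*\<^sup>* y x0"
proof -
  define t where "t = g i"
  have t: "t < L" using g_lt i t_def by simp
  obtain k where k: "k \<le> S" "\<forall>a\<in>Dam. proj i a \<noteq> lineval i t k" using free_line[OF i] t_def by blast
  have DDam: "D (f i) \<subseteq> Dam" using i unfolding Dam_def by blast
  have spk: "sp i t k \<notin> Dam" using k(2) proj_sp by metis
  have k0: "0 < k"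
  proof (rule ccontr)
    assume "\<not> 0 < k"
    then have "k = 0" by simp
    then show False using spk sp0_D[OF i] DDam t_def by auto
  qed
  define JS where "JS = {j. j < k \<and> sp i t j \<in> D (f i)}"
  have JSfin: "finite JS" unfolding JS_def by simp
  have JS0: "0 \<in> JS" unfolding JS_def using k0 sp0_D[OF i] t_def by simp
  define JJ where "JJ = Max JS"
  have JJ: "JJ \<in> JS" unfolding JJ_def using JSfin JS0 by (intro Max_in) auto
  have JJmax: "\<And>j. j \<in> JS \<Longrightarrow> j \<le> JJ" unfolding JJ_def using JSfin by simp
  have JJk: "JJ < k" "sp i t JJ \<in> D (f i)" using JJ unfolding JS_def by auto
  define p where "p = sp i t JJ"
  define q where "q = sp i t (Suc JJ)"
  have cleanj: "sp i t j \<in> CL" if j: "Suc JJ \<le> j" "j \<le> k" for j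
  proof (rule clean_I)
    show "sp i t j \<in> Vm" using sp_Vm[OF i t] j k by simp
    fix i'' assume i'': "i'' \<in> Idx"
    show "sp i t j \<notin> D (f i'')"
    proof (cases "i'' = i")
      case False then show ?thesis using priv_sp[OF i i''] j k t_def by auto
    next
      case True
      show ?thesis
      proof (cases "j < k")
        case True
        then show ?thesis using JJmax[of j] j \<open>i'' = i\<close> unfolding JS_def by fastforce
      next
        case False
        then have "j = k" using j by simp
        then show ?thesis using spk DDam \<open>i'' = i\<close> by blast
      qed
    qed
  qed
  have qk: "(Rin (grid m) CL)\<^sup>*\<^sup>* q (sp i t k)"
    unfolding q_def
  proof (rule chain_rtr[where h = "sp i t"])
    show "Suc JJ \<le> k" using JJk by simp
    fix j assume j: "Suc JJ \<le> j" "j < k"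
    have "{sp i t (Suc j), sp i t j} \<in> snd (grid m)" using sp_step_edge[OF i t] j k by simp
    then show "Rin (grid m) CL (sp i t j) (sp i t (Suc j))"
      unfolding Rin_def using cleanj[of j] cleanj[of "Suc j"] j by (simp add: insert_commute)
  qed
  obtain ys xs where yx: "sp i t k = (ys, xs)" by fastforce
  have yxm: "ys < m" "xs < m" using sp_Vm[OF i t k(1)] yx unfolding Vm_def by auto
  have colz: "(y, z) \<in> CL" if "y < m" for y
    by (rule notDam_clean) (use that z in \<open>auto simp: Vm_def\<close>)
  have roww: "(w0, x) \<in> CL" if "x < m" for x
    by (rule notDam_clean) (use that w0 in \<open>auto simp: Vm_def\<close>)
  have kw: "(Rin (grid m) CL)\<^sup>*\<^sup>* (sp i t k) (w0, z)"
  proof (cases "fst i")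
    case False
    then have lv: "lineval i t k = ys" using yx by (simp add: lineval_def)
    have rowc: "(ys, x) \<in> CL" if "x < m" for x
    proof (rule notDam_clean)
      show "(ys, x) \<in> Vm" using that yxm by (simp add: Vm_def)
      show "(ys, x) \<notin> Dam" using k(2) lv False by (force simp: proj_def)
    qed
    have "(Rin (grid m) CL)\<^sup>*\<^sup>* (ys, xs) (ys, z)"
      by (rule row_path) (use yxm z rowc in auto)
    also have "(Rin (grid m) CL)\<^sup>*\<^sup>* (ys, z) (w0, z)"
      by (rule col_path) (use yxm z w0 colz in auto)
    finally show ?thesis using yx by simp
  next
    case True
    then have lv: "lineval i t k = xs" using yx by (simp add: lineval_def)
    have colc: "(y, xs) \<in> CL" if "y < m" for y
    proof (rule notDam_clean)
      show "(y, xs) \<in> Vm" using that yxm by (simp add: Vm_def)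
      show "(y, xs) \<notin> Dam" using k(2) lv True by (force simp: proj_def)
    qed
    have "(Rin (grid m) CL)\<^sup>*\<^sup>* (ys, xs) (w0, xs)"
      by (rule col_path) (use yxm w0 colc in auto)
    also have "(Rin (grid m) CL)\<^sup>*\<^sup>* (w0, xs) (w0, z)"
      by (rule row_path) (use yxm z w0 roww in auto)
    finally show ?thesis using yx by simp
  qed
  have qclean: "q \<in> CL" unfolding q_def using cleanj JJk by simp
  have q0: "(Rin (grid m) CL)\<^sup>*\<^sup>* q (w0, z)" using qk kw by simp
  have lift: "\<forall>y\<in>\<nu> q. \<forall>x\<in>\<nu> (w0, z). (hstep H R)\<^sup>*\<^sup>* y x" by (rule clean_lift[OF q0 qclean])
  have pq: "{p, q} \<in> snd (grid m)"
    using sp_step_edge[OF i t, of JJ] JJk k unfolding p_def q_def by (simp add: insert_commute)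
  obtain x y where xy: "x \<in> \<nu> p" "y \<in> \<nu> q" "hstep H R x y" using clean_adj[OF qclean pq] by blast
  have pD: "p \<in> D (f i)" using JJk p_def by simp
  have pr: "p \<notin> D (f i')" if "i' \<in> Idx" "i' \<noteq> i" for i'
    using priv_sp[OF i that(1)] that(2) JJk k unfolding p_def t_def by simp
  obtain y0 where y0: "y0 \<in> f i" "(hstep H R)\<^sup>*\<^sup>* y0 x" using priv_comp[OF i pD pr] xy(1) by blast
  have "(hstep H R)\<^sup>*\<^sup>* y0 x0"
    using y0(2) xy(3) lift xy(2) x0 by (meson rtranclp.rtrancl_into_rtrancl rtranclp_trans)
  then show ?thesis using y0 by blast
qed

lemma conn_pair:
  assumes "i1 \<in> Idx" "i2 \<in> Idx"
  shows "\<exists>y1\<in>f i1. \<exists>y2\<in>f i2. (hstep H R)\<^sup>*\<^sup>* y1 y2"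
proof -
  obtain w0 where w0: "w0 < m" "\<forall>a\<in>Dam. fst a \<noteq> w0" using free_row by blast
  obtain z where z: "z < m" "\<forall>a\<in>Dam. snd a \<noteq> z" using free_col by blast
  obtain x0 where x0: "x0 \<in> \<nu> (w0, z)" using nu_ne[of "(w0, z)"] w0 z unfolding Vm_def by auto
  obtain y1 where y1: "y1 \<in> f i1" "(hstep H R)\<^sup>*\<^sup>* y1 x0" using anchor[OF assms(1) w0 z x0] by blast
  obtain y2 where y2: "y2 \<in> f i2" "(hstep H R)\<^sup>*\<^sup>* y2 x0" using anchor[OF assms(2) w0 z x0] by blast
  have "(hstep H R)\<^sup>*\<^sup>* y1 y2" using y1(2) hstep_rtr_sym[OF y2(2)] by simp
  then show ?thesis using y1 y2 by blast
qed

end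


context chosen begin

definition "Bk u = {a \<in> Vm. blkof a = u}"
definition "mu u = \<Union> (\<nu> ` Bk u)"
definition "eset i = (case ends i of (u, v) \<Rightarrow> {u, v})"
definition "rho X = f (SOME i. i \<in> Idx \<and> eset i = X)"

lemma Vn: "fst (grid n) = {0..<n} \<times> {0..<n}" by (simp add: grid_def)

lemma blk_lt: "blk y < n" unfolding blk_def using n1 by simp
lemma blk_mono: "y \<le> y' \<Longrightarrow> blk y \<le> blk y'"
  unfolding blk_def by (simp add: div_le_mono min.coboundedI1)

lemma Bk_conn:
  assumes "a \<in> Bk u" "b \<in> Bk u" shows "(Rin (grid m) (Bk u))\<^sup>*\<^sup>* a b"
proof -
  obtain y1 x1 where a: "a = (y1, x1)" by fastforce
  obtain y2 x2 where b: "b = (y2, x2)" by fastforce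
  have am: "y1 < m" "x1 < m" "blk y1 = fst u" "blk x1 = snd u"
    using assms(1) a unfolding Bk_def Vm_def blkof_def by auto
  have bm: "y2 < m" "x2 < m" "blk y2 = fst u" "blk x2 = snd u"
    using assms(2) b unfolding Bk_def Vm_def blkof_def by auto
  have "(Rin (grid m) (Bk u))\<^sup>*\<^sup>* (y1, x1) (y1, x2)"
  proof (rule row_path)
    fix x assume x: "min x1 x2 \<le> x" "x \<le> max x1 x2"
    have "blk (min x1 x2) \<le> blk x" "blk x \<le> blk (max x1 x2)" using x blk_mono by auto
    moreover have "blk (min x1 x2) = snd u" "blk (max x1 x2) = snd u" using am bm by (auto simp: min_def max_def)
    ultimately have "blk x = snd u" by simp
    moreover have "x < m" using x am bm by simp
    ultimately show "(y1, x) \<in> Bk u" using am unfolding Bk_def Vm_def blkof_def by (simp add: prod_eq_iff)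
  qed (use am bm in auto)
  also have "(Rin (grid m) (Bk u))\<^sup>*\<^sup>* (y1, x2) (y2, x2)"
  proof (rule col_path)
    fix y assume y: "min y1 y2 \<le> y" "y \<le> max y1 y2"
    have "blk (min y1 y2) \<le> blk y" "blk y \<le> blk (max y1 y2)" using y blk_mono by auto
    moreover have "blk (min y1 y2) = fst u" "blk (max y1 y2) = fst u" using am bm by (auto simp: min_def max_def)
    ultimately have "blk y = fst u" by simp
    moreover have "y < m" using y am bm by simp
    ultimately show "(y, x2) \<in> Bk u" using bm unfolding Bk_def Vm_def blkof_def by (simp add: prod_eq_iff)
  qed (use am bm in auto)
  finally show ?thesis using a b by simp
qed

lemma Bk_ne: assumes "u \<in> fst (grid n)" shows "(fst u * s + 0, snd u * s + 0) \<in> Bk u"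
proof -
  have u: "fst u < n" "snd u < n" using assms Vn by auto
  show ?thesis unfolding Bk_def Vm_def blkof_def
    using coord_lt[OF u(1) s_pos] coord_lt[OF u(2) s_pos] blk_eq[OF u(1) s_pos] blk_eq[OF u(2) s_pos]
    by simp
qed

lemma Bk_Vm: "Bk u \<subseteq> Vm" unfolding Bk_def by blast

lemma mu_sub: "mu u \<subseteq> hV H" unfolding mu_def using Bk_Vm nu_sub by blast

lemma mu_conn: assumes "u \<in> fst (grid n)" shows "connected_in (primal_graph H) (mu u)"
  unfolding connected_in_Rin
proof (intro conjI)
  show "mu u \<noteq> {}" unfolding mu_def using Bk_ne[OF assms] nu_ne Bk_Vm by blast
  show "mu u \<subseteq> fst (primal_graph H)" using mu_sub V_primal by simp
  show "\<forall>x\<in>mu u. \<forall>y\<in>mu u. (Rin (primal_graph H) (mu u))\<^sup>*\<^sup>* x y"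
  proof (intro ballI)
    fix x y assume x: "x \<in> mu u" and y: "y \<in> mu u"
    obtain a where a: "a \<in> Bk u" "x \<in> \<nu> a" using x unfolding mu_def by blast
    obtain b where b: "b \<in> Bk u" "y \<in> \<nu> b" using y unfolding mu_def by blast
    have "\<forall>x\<in>\<nu> a. \<forall>y\<in>\<nu> b. (Rin (primal_graph H) (mu u))\<^sup>*\<^sup>* x y"
    proof (rule lift_conn[OF _ _ _ Bk_conn[OF a(1) b(1)] a(1)])
      fix c x y assume c: "c \<in> Bk u" "x \<in> \<nu> c" "y \<in> \<nu> c"
      have cV: "c \<in> Vm" using c Bk_Vm by blast
      have r1: "(Rin (primal_graph H) (\<nu> c))\<^sup>*\<^sup>* x y" using mm_conn[OF cV] c unfolding connected_in_Rin by blast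
      have r2: "\<nu> c \<subseteq> mu u" using c unfolding mu_def by blast
      show "(Rin (primal_graph H) (mu u))\<^sup>*\<^sup>* x y" by (rule Rin_mono[OF r2 r1])
    next
      fix c d assume cd: "c \<in> Bk u" "d \<in> Bk u" "{c, d} \<in> snd (grid m)"
      obtain x y where xy: "x \<in> \<nu> c" "y \<in> \<nu> d" "{x, y} \<in> snd (primal_graph H)" using mm_adj[OF cd(3)] by blast
      have "x \<in> mu u" "y \<in> mu u" using xy cd unfolding mu_def by blast+
      then have "Rin (primal_graph H) (mu u) x y" unfolding Rin_def using xy by simp
      then show "\<exists>x\<in>\<nu> c. \<exists>y\<in>\<nu> d. (Rin (primal_graph H) (mu u))\<^sup>*\<^sup>* x y" using xy by blast
    next
      fix c assume "c \<in> Bk u" then show "\<nu> c \<noteq> {}" using nu_ne Bk_Vm by blast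
    qed
    then show "(Rin (primal_graph H) (mu u))\<^sup>*\<^sup>* x y" using a b by blast
  qed
qed

lemma mu_disj: assumes "u \<noteq> v" shows "mu u \<inter> mu v = {}"
proof (rule ccontr)
  assume "mu u \<inter> mu v \<noteq> {}"
  then obtain x a b where "a \<in> Bk u" "b \<in> Bk v" "x \<in> \<nu> a" "x \<in> \<nu> b" unfolding mu_def by blast
  moreover have "a \<noteq> b" using calculation assms unfolding Bk_def by blast
  ultimately show False using mm_disj Bk_Vm by blast
qed

lemma mu_cover: "\<Union> (mu ` fst (grid n)) = hV H"
proof
  show "\<Union> (mu ` fst (grid n)) \<subseteq> hV H" using mu_sub by blast
  show "hV H \<subseteq> \<Union> (mu ` fst (grid n))"
  proof
    fix x assume "x \<in> hV H"
    then obtain a where a: "a \<in> Vm" "x \<in> \<nu> a" using mm_cover by blast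
    have "blkof a \<in> fst (grid n)" unfolding Vn blkof_def using blk_lt by simp
    moreover have "a \<in> Bk (blkof a)" using a unfolding Bk_def by simp
    ultimately show "x \<in> \<Union> (mu ` fst (grid n))" using a unfolding mu_def by blast
  qed
qed

lemma eset_simps: "eset (False, I, J) = {(I, J), (Suc I, J)}" "eset (True, I, J) = {(I, J), (I, Suc J)}"
  by (simp_all add: eset_def ends_def)

lemma grid_n_edges: "snd (grid n) = eset ` Idx"
proof
  show "snd (grid n) \<subseteq> eset ` Idx"
  proof
    fix X assume "X \<in> snd (grid n)"
    then obtain i j i' j' where X: "X = {(i, j), (i', j')}" "i < n" "j < n" "i' < n" "j' < n"
      "(i' = Suc i \<and> j' = j) \<or> (i' = i \<and> j' = Suc j)" unfolding grid_def by auto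
    from X(6) show "X \<in> eset ` Idx"
    proof
      assume h: "i' = Suc i \<and> j' = j"
      then have "(False, i, j) \<in> Idx" "X = eset (False, i, j)" using X unfolding Idx_def by (auto simp: eset_simps)
      then show ?thesis by blast
    next
      assume h: "i' = i \<and> j' = Suc j"
      then have "(True, i, j) \<in> Idx" "X = eset (True, i, j)" using X unfolding Idx_def by (auto simp: eset_simps)
      then show ?thesis by blast
    qed
  qed
  show "eset ` Idx \<subseteq> snd (grid n)"
  proof
    fix X assume "X \<in> eset ` Idx"
    then obtain i where i: "i \<in> Idx" "X = eset i" by blast
    from i(1) show "X \<in> snd (grid n)"
    proof (cases rule: Idx_cases)
      case (V I J) then show ?thesis using i grid_edge_v[of I n J] by (simp add: eset_simps)
    next
      case (Ho I J) then show ?thesis using i grid_edge_h[of I n J] by (simp add: eset_simps)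
    qed
  qed
qed

lemma eset_inj: "inj_on eset Idx"
proof (rule inj_onI)
  fix i1 i2 assume a: "i1 \<in> Idx" "i2 \<in> Idx" "eset i1 = eset i2"
  from a(1) show "i1 = i2"
  proof (cases rule: Idx_cases)
    case (V I J)
    from a(2) show ?thesis
    proof (cases rule: Idx_cases)
      case (V I' J') then show ?thesis using a \<open>i1 = (False, I, J)\<close> by (auto simp: eset_simps doubleton_eq_iff)
    next
      case (Ho I' J') then show ?thesis using a \<open>i1 = (False, I, J)\<close> by (auto simp: eset_simps doubleton_eq_iff)
    qed
  next
    case (Ho I J)
    from a(2) show ?thesis
    proof (cases rule: Idx_cases)
      case (V I' J') then show ?thesis using a \<open>i1 = (True, I, J)\<close> by (auto simp: eset_simps doubleton_eq_iff)
    next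
      case (Ho I' J') then show ?thesis using a \<open>i1 = (True, I, J)\<close> by (auto simp: eset_simps doubleton_eq_iff)
    qed
  qed
qed

lemma rho_eq: assumes "i \<in> Idx" shows "rho (eset i) = f i"
proof -
  have "(SOME j. j \<in> Idx \<and> eset j = eset i) = i"
  proof (rule some_equality)
    show "i \<in> Idx \<and> eset i = eset i" using assms by simp
    show "j = i" if "j \<in> Idx \<and> eset j = eset i" for j
      using eset_inj assms that by (meson inj_onD)
  qed
  then show ?thesis unfolding rho_def by simp
qed

lemma eset_ends: "eset i = {fst (ends i), snd (ends i)}"
  unfolding eset_def by (simp add: case_prod_beta)

lemma f_meets: assumes "i \<in> Idx"
  shows "f i \<inter> mu (fst (ends i)) \<noteq> {}" "f i \<inter> mu (snd (ends i)) \<noteq> {}"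
proof -
  have t: "g i < L" using g_lt assms by simp
  have "sp i (g i) 0 \<in> Bk (fst (ends i))" unfolding Bk_def using sp_Vm[OF assms t] sp_blk[OF assms t] by simp
  then have "\<nu> (sp i (g i) 0) \<subseteq> mu (fst (ends i))" unfolding mu_def by blast
  then show "f i \<inter> mu (fst (ends i)) \<noteq> {}" using f_prop[OF assms] by blast
  have "bp i (g i) \<in> Bk (snd (ends i))" unfolding Bk_def using bp_Vm[OF assms t] bp_blk[OF assms t] by simp
  then have "\<nu> (bp i (g i)) \<subseteq> mu (snd (ends i))" unfolding mu_def by blast
  then show "f i \<inter> mu (snd (ends i)) \<noteq> {}" using f_prop[OF assms] by blast
qed

lemma edge_meets:
  assumes "{u, v} \<in> snd (grid n)"
  shows "rho {u, v} \<inter> mu u \<noteq> {} \<and> rho {u, v} \<inter> mu v \<noteq> {}"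
proof -
  obtain i where i: "i \<in> Idx" "{u, v} = eset i" using assms grid_n_edges by blast
  have "rho {u, v} = f i" using rho_eq i by simp
  moreover have "u \<in> {fst (ends i), snd (ends i)}" "v \<in> {fst (ends i), snd (ends i)}"
    using i(2) eset_ends by blast+
  ultimately show ?thesis using f_meets[OF i(1)] by blast
qed

lemma R_rho: "rho ` snd (grid n) = R"
proof -
  have "rho ` snd (grid n) = (\<lambda>i. rho (eset i)) ` Idx" unfolding grid_n_edges by (simp add: image_image)
  also have "\<dots> = f ` Idx" by (rule image_cong) (simp_all add: rho_eq)
  finally show ?thesis unfolding R_def .
qed

lemma expressive: "expressive_minor_map (grid n) H mu"
  unfolding expressive_minor_map_def
proof (intro conjI)
  show "minor_map (grid n) (primal_graph H) mu"
    unfolding minor_map_def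
  proof (intro conjI)
    show "\<forall>v\<in>fst (grid n). connected_in (primal_graph H) (mu v)" using mu_conn by blast
    show "\<forall>u\<in>fst (grid n). \<forall>v\<in>fst (grid n). u \<noteq> v \<longrightarrow> mu u \<inter> mu v = {}" using mu_disj by blast
    show "\<Union> (mu ` fst (grid n)) = fst (primal_graph H)" using mu_cover V_primal by simp
    show "\<forall>u v. {u, v} \<in> snd (grid n) \<longrightarrow> (\<exists>x\<in>mu u. \<exists>y\<in>mu v. {x, y} \<in> snd (primal_graph H))"
    proof (intro allI impI)
      fix u v assume uv: "{u, v} \<in> snd (grid n)"
      obtain x y where x: "x \<in> rho {u, v}" "x \<in> mu u" and y: "y \<in> rho {u, v}" "y \<in> mu v"
        using edge_meets[OF uv] by blast
      have "u \<noteq> v" using grid_edge_D[OF uv] by simp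
      then have "mu u \<inter> mu v = {}" by (rule mu_disj)
      then have xy: "x \<noteq> y" using x(2) y(2) by blast
      have "rho {u, v} \<in> f ` Idx" using uv R_rho unfolding R_def by blast
      then obtain i where "i \<in> Idx" "rho {u, v} = f i" by blast
      then have rE: "rho {u, v} \<in> hE H" using f_prop by simp
      have "x \<in> hV H" "y \<in> hV H" using x(2) y(2) mu_sub by blast+
      then have "{x, y} \<in> snd (primal_graph H)" unfolding primal_edge
        using xy rE x(1) y(1) by blast
      then show "\<exists>x\<in>mu u. \<exists>y\<in>mu v. {x, y} \<in> snd (primal_graph H)" using x y by blast
    qed
  qed
  show "\<exists>\<rho>. inj_on \<rho> (snd (grid n)) \<and> \<rho> ` snd (grid n) \<subseteq> hE H \<and>
     (\<forall>u v. {u, v} \<in> snd (grid n) \<longrightarrow> \<rho> {u, v} \<inter> mu u \<noteq> {} \<and> \<rho> {u, v} \<inter> mu v \<noteq> {}) \<and>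
     (\<forall>e1\<in>snd (grid n). \<forall>e2\<in>snd (grid n). e1 \<noteq> e2 \<and> e1 \<inter> e2 \<noteq> {} \<longrightarrow>
        (\<exists>es vs. hpath H es vs \<and> hd es = \<rho> e1 \<and> last es = \<rho> e2 \<and>
           (\<forall>f\<in>set es. f \<in> \<rho> ` snd (grid n) \<longrightarrow> f = \<rho> e1 \<or> f = \<rho> e2)))"
  proof (intro exI[of _ rho] conjI)
    show "inj_on rho (snd (grid n))"
    proof (rule inj_onI)
      fix X Y assume XY: "X \<in> snd (grid n)" "Y \<in> snd (grid n)" "rho X = rho Y"
      obtain i1 where i1: "i1 \<in> Idx" "X = eset i1" using XY grid_n_edges by blast
      obtain i2 where i2: "i2 \<in> Idx" "Y = eset i2" using XY grid_n_edges by blast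
      have "f i1 = f i2" using XY i1 i2 rho_eq by simp
      then have "i1 = i2" using f_inj i1 i2 by (meson inj_onD)
      then show "X = Y" using i1 i2 by simp
    qed
    show "rho ` snd (grid n) \<subseteq> hE H"
    proof -
      have "f ` Idx \<subseteq> hE H" using f_prop by blast
      then show ?thesis using R_rho unfolding R_def by simp
    qed
    show "\<forall>u v. {u, v} \<in> snd (grid n) \<longrightarrow> rho {u, v} \<inter> mu u \<noteq> {} \<and> rho {u, v} \<inter> mu v \<noteq> {}"
      using edge_meets by blast
    show "\<forall>e1\<in>snd (grid n). \<forall>e2\<in>snd (grid n). e1 \<noteq> e2 \<and> e1 \<inter> e2 \<noteq> {} \<longrightarrow>
        (\<exists>es vs. hpath H es vs \<and> hd es = rho e1 \<and> last es = rho e2 \<and>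
           (\<forall>f\<in>set es. f \<in> rho ` snd (grid n) \<longrightarrow> f = rho e1 \<or> f = rho e2))"
    proof (intro ballI impI)
      fix e1 e2 assume e: "e1 \<in> snd (grid n)" "e2 \<in> snd (grid n)"
      obtain i1 where i1: "i1 \<in> Idx" "e1 = eset i1" using e grid_n_edges by blast
      obtain i2 where i2: "i2 \<in> Idx" "e2 = eset i2" using e grid_n_edges by blast
      obtain y1 y2 where y: "y1 \<in> f i1" "y2 \<in> f i2" "(hstep H R)\<^sup>*\<^sup>* y1 y2"
        using conn_pair[OF i1(1) i2(1)] by blast
      have "\<exists>es vs. hpath H es vs \<and> hd es = f i1 \<and> last es = f i2 \<and> (\<forall>g\<in>set es. g \<in> R \<longrightarrow> g = f i1 \<or> g = f i2)"
        by (rule hconn_hpath[OF y(3) _ y(1) _ y(2) hyp]) (use f_prop i1 i2 in auto)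
      then show "\<exists>es vs. hpath H es vs \<and> hd es = rho e1 \<and> last es = rho e2 \<and>
           (\<forall>f\<in>set es. f \<in> rho ` snd (grid n) \<longrightarrow> f = rho e1 \<or> f = rho e2)"
        using R_rho rho_eq i1 i2 by simp
    qed
  qed
qed

end

theorem lemmaB2:
  fixes H :: "'v hypergraph" and n m :: nat
  assumes "hypergraph H" and "finite (hV H)" and "hV H \<noteq> {}"
    and "reduced H"
    and "n \<ge> 1"
    and "m = 4 * hrank H ^ 6 * n ^ 5"
    and "is_minor (grid m) (primal_graph H)"
  shows "expressive_minor (grid n) H"
proof -
  obtain \<nu> where nu: "minor_map (grid m) (primal_graph H) \<nu>" using assms(7) unfolding is_minor_def by blast
  interpret c: constr H n m \<nu> using assms nu by unfold_locales
  obtain g where g: "\<forall>i\<in>c.Idx. g i < c.L" "\<forall>i\<in>c.Idx. \<forall>i'\<in>c.Idx. i \<noteq> i' \<longrightarrow> \<not> c.kill (i', g i') (i, g i)"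
    using c.exists_g by blast
  interpret ch: chosen H n m \<nu> g using g by unfold_locales
  show ?thesis unfolding expressive_minor_def using ch.expressive by blast
qed


end
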